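(* Let $n\ge2$, let $B$ be the open unit ball of $\mathbb{R}^n$ centered at $0$, let $\psi\in C_0^\infty(\mathbb{R}^n)$ with $\operatorname{supp}\psi\subseteq B$ and $\psi\not\equiv0$, and let $\Omega\subset\mathbb{R}^n$ be a bounded open set star-shaped with respect to every point of $\overline B$. Let $q>n$ and $F\in L^q(\Omega)$. Then: (i) the formula $$v(x)=\int_\Omega F(y)\left[\frac{x-y}{|x-y|^n}\int_{|x-y|}^{+\infty}\psi\Big(y+\xi\frac{x-y}{|x-y|}\Big)\xi^{n-1}d\xi\right]dy$$ defines $v(x)$ for every $x\in\mathbb{R}^n$ (not only almost everywhere), giving a function $v:\mathbb{R}^n\to\mathbb{R}^n$; (ii) $v(x)=0$ for all $x\in\mathbb{R}^n\setminus\Omega$; (iii) $|v(x)|\le c\,\|F\|_{L^q(\Omega)}$ for all $x\in\mathbb{R}^n$, where $c$ depends only on $n,\psi,\operatorname{diam}\Omega$ and $q$; (iv) $v(x)=\int_\Omega F(y)\Big[(x-y)\int_1^\infty\psi(y+\alpha(x-y))\alpha^{n-1}d\alpha\Big]dy$; (v) $v(x)=\int_\Omega F(y)\Big[\frac{x-y}{|x-y|^n}\int_0^\infty\psi\big(x+r\frac{x-y}{|x-y|}\big)(|x-y|+r)^{n-1}dr\Big]dy$; (vi) $v(x)=\int_{x-\Omega}F(x-z)\frac{z}{|z|^n}\int_0^\infty\psi\big(x+r\frac{z}{|z|}\big)(|z|+r)^{n-1}\,dr\,dz$, where $x-\Omega=\{x-y:\ y\in\Omega\}$.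
   Context: $\Omega$ is star-shaped with respect to a point $p$ if $p\in\Omega$ and for every $y\in\Omega$ the segment joining $p$ and $y$ lies in $\Omega$. *)

theory Defs
  imports "HOL-Analysis.Analysis"
begin

fun iter_deriv :: "('a::real_normed_vector \<Rightarrow> real) \<Rightarrow> 'a list \<Rightarrow> 'a \<Rightarrow> real" where
  "iter_deriv f [] = f"
| "iter_deriv f (u # us) = (\<lambda>x. frechet_derivative (iter_deriv f us) (at x) u)"

definition smooth_fun :: "('a::real_normed_vector \<Rightarrow> real) \<Rightarrow> bool" where
  "smooth_fun f \<longleftrightarrow> (\<forall>us x. iter_deriv f us differentiable (at x))"

definition supp :: "('a::topological_space \<Rightarrow> real) \<Rightarrow> 'a set" where
  "supp f = closure {x. f x \<noteq> 0}"

definition star_shaped_wrt :: "'a::real_vector \<Rightarrow> 'a set \<Rightarrow> bool" where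
  "star_shaped_wrt p S \<longleftrightarrow> p \<in> S \<and> (\<forall>y\<in>S. closed_segment p y \<subseteq> S)"

definition Lq_norm :: "real \<Rightarrow> ('a::euclidean_space) set \<Rightarrow> ('a \<Rightarrow> real) \<Rightarrow> real" where
  "Lq_norm q S F = (LINT y:S|lebesgue. \<bar>F y\<bar> powr q) powr (1 / q)"

definition inner_fn :: "(real^'n \<Rightarrow> real) \<Rightarrow> real^'n \<Rightarrow> real^'n \<Rightarrow> real \<Rightarrow> real" where
  "inner_fn \<psi> x y \<xi> = \<psi> (y + \<xi> *\<^sub>R ((x - y) /\<^sub>R norm (x - y))) * \<xi> ^ (CARD('n) - 1)"

definition kernel :: "(real^'n \<Rightarrow> real) \<Rightarrow> real^'n \<Rightarrow> real^'n \<Rightarrow> real^'n" where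
  "kernel \<psi> x y = ((LBINT \<xi>:{norm (x - y)..}. inner_fn \<psi> x y \<xi>) / norm (x - y) ^ CARD('n)) *\<^sub>R (x - y)"

definition v_op :: "(real^'n \<Rightarrow> real) \<Rightarrow> (real^'n) set \<Rightarrow> (real^'n \<Rightarrow> real) \<Rightarrow> real^'n \<Rightarrow> real^'n" where
  "v_op \<psi> \<Omega> F x = (LINT y:\<Omega>|lebesgue. F y *\<^sub>R kernel \<psi> x y)"

end

theory Submission imports Defs begin
lemma psi_cont:
  fixes \<psi> :: "real^'n \<Rightarrow> real"
  assumes smooth: "smooth_fun \<psi>"
  shows "continuous_on UNIV \<psi>"
proof -
  have "\<And>x. \<psi> differentiable (at x)"
  proof -
    fix x have "iter_deriv \<psi> [] differentiable (at x)" using smooth unfolding smooth_fun_def by blast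
    then show "\<psi> differentiable (at x)" by simp
  qed
  then have ic: "\<And>x. isCont \<psi> x" by (rule differentiable_imp_continuous_within)
  show c: "continuous_on UNIV \<psi>" by (rule continuous_at_imp_continuous_on) (blast intro: ic)
qed

lemma psi_vanish:
  fixes \<psi> :: "real^'n \<Rightarrow> real"
  assumes supp: "supp \<psi> \<subseteq> ball 0 1" and "\<psi> z \<noteq> 0"
  shows "norm z < 1"
proof -
  have z: "z \<in> {x. \<psi> x \<noteq> 0}" using assms(2) by simp
  have "z \<in> closure {x. \<psi> x \<noteq> 0}" by (rule subsetD[OF closure_subset z])
  then have "z \<in> ball 0 1" using supp unfolding supp_def by (rule subsetD[rotated])
  then show "norm z < 1" by simp
qed

lemma psi_bound:
  fixes \<psi> :: "real^'n \<Rightarrow> real"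
  assumes c: "continuous_on UNIV \<psi>" and v: "\<And>z. \<psi> z \<noteq> 0 \<Longrightarrow> norm z < 1"
  shows "\<exists>M\<ge>0. \<forall>z. \<bar>\<psi> z\<bar> \<le> M"
proof -
  have "compact (\<psi> ` cball 0 1)"
    by (intro compact_continuous_image continuous_on_subset[OF c]) auto
  then have "bounded (\<psi> ` cball 0 1)" by (rule compact_imp_bounded)
  then obtain B where "\<forall>y\<in>\<psi> ` cball 0 1. norm y \<le> B" unfolding bounded_iff by blast
  then have B: "\<And>z. z \<in> cball 0 1 \<Longrightarrow> norm (\<psi> z) \<le> B" by simp
  have "\<forall>z. \<bar>\<psi> z\<bar> \<le> max B 0"
  proof
    fix z show "\<bar>\<psi> z\<bar> \<le> max B 0"
    proof (cases "\<psi> z = 0")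
      case False
      then have "z \<in> cball 0 1" using v[of z] by simp
      then show ?thesis using B[of z] by simp
    qed simp
  qed
  then show ?thesis by (intro exI[of _ "max B 0"]) auto
qed
lemma half_int:
  fixes a D :: real
  assumes "0 \<le> a" "a < 1" "0 \<le> D"
  shows "(\<integral>\<^sup>+ t. ennreal (indicator {0..D} t * t powr (-a)) \<partial>lborel) = ennreal (D powr (1 - a) / (1 - a))"
proof -
  have "((\<lambda>x. x powr (-a)) has_integral (D powr (-a + 1) / (-a + 1))) {0..D}"
    by (rule has_integral_powr_from_0) (use assms in auto)
  then have "((\<lambda>x. if x \<in> {0..D} then x powr (-a) else 0) has_integral (D powr (1 - a) / (1 - a))) UNIV"
    unfolding has_integral_restrict_UNIV by (simp add: add.commute)
  moreover have "(\<lambda>x. if x \<in> {0..D} then x powr (-a) else 0) = (\<lambda>t. indicator {0..D} t * t powr (-a))"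
    by (auto simp: indicator_def)
  ultimately have hi: "((\<lambda>t. indicator {0..D} t * t powr (-a)) has_integral (D powr (1 - a) / (1 - a))) UNIV"
    by simp
  show ?thesis
    by (rule nn_integral_has_integral_lborel[OF _ _ hi]) (auto simp: indicator_def)
qed

definition hfun :: "real \<Rightarrow> real \<Rightarrow> real \<Rightarrow> ennreal" where
  "hfun a D t = (if t = 0 then \<infinity> else ennreal (indicator {-D..D} t * \<bar>t\<bar> powr (-a)))"

lemma hfun_meas[measurable]: "hfun a D \<in> borel_measurable borel"
  unfolding hfun_def[abs_def] by measurable

lemma one_dim:
  fixes a D :: real
  assumes "0 \<le> a" "a < 1" "0 \<le> D"
  shows "(\<integral>\<^sup>+ t. hfun a D t \<partial>lborel) = ennreal (2 * (D powr (1 - a) / (1 - a)))"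
proof -
  let ?g = "\<lambda>t. indicator {0..D} t * t powr (-a)"
  have "(\<integral>\<^sup>+ t. hfun a D t \<partial>lborel) = (\<integral>\<^sup>+ t. ennreal (?g t) + ennreal (?g (-t)) \<partial>lborel)"
  proof (rule nn_integral_cong_AE)
    show "AE t in lborel. hfun a D t = ennreal (?g t) + ennreal (?g (-t))"
      using AE_lborel_singleton[of 0]
    proof (rule eventually_mono)
      fix t :: real assume "t \<noteq> 0"
      then show "hfun a D t = ennreal (?g t) + ennreal (?g (-t))"
      proof (cases "t > 0")
        case True
        have "?g (-t) = 0" using True by (simp add: indicator_def)
        moreover have "indicator {-D..D} t * \<bar>t\<bar> powr (-a) = ?g t"
          using True assms by (simp add: indicator_def)
        ultimately show ?thesis unfolding hfun_def using True by simp
      next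
        case False
        then have tn: "t < 0" using \<open>t \<noteq> 0\<close> by simp
        have "?g t = 0" using tn by (simp add: indicator_def)
        moreover have "indicator {-D..D} t * \<bar>t\<bar> powr (-a) = ?g (-t)"
          using tn assms by (auto simp: indicator_def)
        ultimately show ?thesis unfolding hfun_def using tn by simp
      qed
    qed
  qed
  also have "\<dots> = (\<integral>\<^sup>+ t. ennreal (?g t) \<partial>lborel) + (\<integral>\<^sup>+ t. ennreal (?g (-t)) \<partial>lborel)"
    by (rule nn_integral_add) auto
  also have "\<dots> = (\<integral>\<^sup>+ t. ennreal (?g t) \<partial>lborel) + (\<integral>\<^sup>+ t. ennreal (?g t) \<partial>lborel)"
    using nn_integral_real_affine[of "\<lambda>t. ennreal (?g t)" "-1" 0] by simp
  also have "\<dots> = ennreal (D powr (1 - a) / (1 - a)) + ennreal (D powr (1 - a) / (1 - a))"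
    by (simp only: half_int[OF assms])
  also have "\<dots> = ennreal (D powr (1 - a) / (1 - a) + D powr (1 - a) / (1 - a))"
    by (rule ennreal_plus[symmetric]) (use assms in simp_all)
  finally show ?thesis by (simp only: mult_2)
qed

lemma card_Basis_vec: "card (Basis :: (real^'n) set) = CARD('n)"
  using DIM_cart[where 'a=real and 'b='n] by simp

lemma radial:
  fixes x :: "real^'n" and s D :: real
  assumes s0: "0 \<le> s" and sn: "s < CARD('n)" and D0: "0 \<le> D"
  shows "(\<integral>\<^sup>+ y. indicator (cball x D) y * ennreal (norm (x - y) powr (-s)) \<partial>lborel)
     \<le> ennreal ((2 * (D powr (1 - s / CARD('n)) / (1 - s / CARD('n)))) ^ CARD('n))"
proof -
  define a where "a = s / CARD('n)"
  have a0: "0 \<le> a" and a1: "a < 1" unfolding a_def using s0 sn by auto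
  have sa: "s = a * CARD('n)" unfolding a_def by simp
  define H where "H = 2 * (D powr (1 - a) / (1 - a))"
  have H0: "H \<ge> 0" unfolding H_def using a1 by simp
  have pw: "indicator (cball x D) y * ennreal (norm (x - y) powr (-s)) \<le> (\<Prod>b\<in>Basis. hfun a D (y \<bullet> b - x \<bullet> b))"
    for y :: "real^'n"
  proof (cases "y \<in> cball x D \<and> y \<noteq> x")
    case False
    then show ?thesis by (auto simp: indicator_def)
  next
    case True
    let ?z = "y - x"
    have zD: "norm ?z \<le> D" using True by (simp add: dist_norm norm_minus_commute)
    have zb: "\<bar>?z \<bullet> b\<bar> \<le> D" if "b \<in> Basis" for b
      using Basis_le_norm[OF that, of ?z] zD by linarith
    have comp: "y \<bullet> b - x \<bullet> b = ?z \<bullet> b" for b by (simp add: inner_diff_left)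
    show ?thesis
    proof (cases "\<exists>b\<in>Basis. ?z \<bullet> b = 0")
      case True
      have nz: "hfun a D (?z \<bullet> b) \<noteq> 0" if "b \<in> Basis" for b
        using zb[OF that] by (auto simp: hfun_def indicator_def)
      have "(\<Prod>b\<in>Basis. hfun a D (?z \<bullet> b)) = top"
        unfolding ennreal_prod_eq_top using True nz by (auto simp: hfun_def)
      then show ?thesis unfolding comp by simp
    next
      case False
      then have nzb: "\<And>b. b \<in> Basis \<Longrightarrow> ?z \<bullet> b \<noteq> 0" by blast
      have zpos: "norm ?z > 0" using True by simp
      have "(\<Prod>b\<in>Basis. hfun a D (?z \<bullet> b)) = (\<Prod>b\<in>Basis. ennreal (\<bar>?z \<bullet> b\<bar> powr (-a)))"
      proof (rule prod.cong[OF refl])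
        fix b :: "real^'n" assume b: "b \<in> Basis"
        have "-D \<le> ?z \<bullet> b" "?z \<bullet> b \<le> D" using zb[OF b] by auto
        then show "hfun a D (?z \<bullet> b) = ennreal (\<bar>?z \<bullet> b\<bar> powr (-a))"
          using nzb[OF b] by (simp add: hfun_def indicator_def)
      qed
      also have "\<dots> = ennreal (\<Prod>b\<in>Basis. \<bar>?z \<bullet> b\<bar> powr (-a))"
        by (rule prod_ennreal) simp
      finally have A: "(\<Prod>b\<in>Basis. hfun a D (?z \<bullet> b)) = ennreal (\<Prod>b\<in>Basis. \<bar>?z \<bullet> b\<bar> powr (-a))" .
      have "norm ?z powr (-s) = (norm ?z powr (-a)) powr (real CARD('n))"
        by (simp add: powr_powr sa)
      also have "\<dots> = (norm ?z powr (-a)) ^ CARD('n)"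
        by (rule powr_realpow) (use zpos in simp)
      also have "\<dots> = (\<Prod>b\<in>(Basis::(real^'n) set). norm ?z powr (-a))"
        by (simp add: prod_constant card_Basis_vec)
      also have "\<dots> \<le> (\<Prod>b\<in>Basis. \<bar>?z \<bullet> b\<bar> powr (-a))"
      proof (rule prod_mono)
        fix b :: "real^'n" assume b: "b \<in> Basis"
        have "norm ?z powr (-a) \<le> \<bar>?z \<bullet> b\<bar> powr (-a)"
          by (rule powr_mono2') (use a0 nzb[OF b] Basis_le_norm[OF b, of ?z] in auto)
        then show "0 \<le> norm ?z powr (-a) \<and> norm ?z powr (-a) \<le> \<bar>?z \<bullet> b\<bar> powr (-a)" by simp
      qed
      finally have "ennreal (norm ?z powr (-s)) \<le> (\<Prod>b\<in>Basis. hfun a D (?z \<bullet> b))"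
        unfolding A by (rule ennreal_leI)
      then show ?thesis using True unfolding comp by (simp add: norm_minus_commute indicator_def)
    qed
  qed
  have "(\<integral>\<^sup>+ y. indicator (cball x D) y * ennreal (norm (x - y) powr (-s)) \<partial>lborel)
      \<le> (\<integral>\<^sup>+ y. (\<Prod>b\<in>Basis. hfun a D (y \<bullet> b - x \<bullet> b)) \<partial>lborel)"
    by (rule nn_integral_mono) (rule pw)
  also have "\<dots> = (\<Prod>b\<in>(Basis::(real^'n) set). (\<integral>\<^sup>+ t. hfun a D (t - x \<bullet> b) \<partial>lborel))"
    by (rule nn_integral_lborel_prod[where f="\<lambda>b t. hfun a D (t - x \<bullet> b)"]) auto
  also have "\<dots> = (\<Prod>b\<in>(Basis::(real^'n) set). ennreal H)"
  proof (rule prod.cong[OF refl])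
    fix b :: "real^'n"
    have "(\<integral>\<^sup>+ t. hfun a D (t - x \<bullet> b) \<partial>lborel) = (\<integral>\<^sup>+ t. hfun a D t \<partial>lborel)"
      using nn_integral_real_affine[of "\<lambda>t. hfun a D (t - x \<bullet> b)" 1 "x \<bullet> b"] by simp
    also have "\<dots> = ennreal H" unfolding H_def by (rule one_dim[OF a0 a1 D0])
    finally show "(\<integral>\<^sup>+ t. hfun a D (t - x \<bullet> b) \<partial>lborel) = ennreal H" .
  qed
  also have "\<dots> = ennreal (H ^ CARD('n))"
    using H0 by (simp add: prod_constant card_Basis_vec ennreal_power)
  finally show ?thesis unfolding H_def a_def .
qed

lemma young_integrable:
  fixes f g :: "'a \<Rightarrow> real"
  assumes fm: "f \<in> borel_measurable M" and gm: "g \<in> borel_measurable M"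
    and fi: "integrable M (\<lambda>x. \<bar>f x\<bar> powr p)" and gi: "integrable M (\<lambda>x. \<bar>g x\<bar> powr p')"
    and p: "p > 1" "p' > 1" "1/p + 1/p' = 1"
  shows "integrable M (\<lambda>x. f x * g x)"
proof (rule Bochner_Integration.integrable_bound)
  show "integrable M (\<lambda>x. \<bar>f x\<bar> powr p / p + \<bar>g x\<bar> powr p' / p')"
    using fi gi by auto
  show "(\<lambda>x. f x * g x) \<in> borel_measurable M" using fm gm by measurable
  show "AE x in M. norm (f x * g x) \<le> norm (\<bar>f x\<bar> powr p / p + \<bar>g x\<bar> powr p' / p')"
  proof (rule AE_I2)
    fix x
    have "\<bar>f x\<bar> * \<bar>g x\<bar> \<le> \<bar>f x\<bar> powr p / p + \<bar>g x\<bar> powr p' / p'"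
      by (rule Youngs_inequality) (use p in auto)
    moreover have "0 \<le> \<bar>f x\<bar> powr p / p + \<bar>g x\<bar> powr p' / p'" using p by simp
    ultimately show "norm (f x * g x) \<le> norm (\<bar>f x\<bar> powr p / p + \<bar>g x\<bar> powr p' / p')"
      by (simp add: abs_mult)
  qed
qed

lemma zero_norm_AE:
  fixes f :: "'a \<Rightarrow> real"
  assumes fi: "integrable M (\<lambda>x. \<bar>f x\<bar> powr p)" and p: "p > 0"
    and z: "(LINT x|M. \<bar>f x\<bar> powr p) = 0"
  shows "AE x in M. f x = 0"
proof -
  have "AE x in M. \<bar>f x\<bar> powr p = 0"
    using z integral_nonneg_eq_0_iff_AE[OF fi] by simp
  then show ?thesis by (rule eventually_mono) simp
qed

lemma holder:
  fixes f g :: "'a \<Rightarrow> real"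
  assumes fm: "f \<in> borel_measurable M" and gm: "g \<in> borel_measurable M"
    and fi: "integrable M (\<lambda>x. \<bar>f x\<bar> powr p)" and gi: "integrable M (\<lambda>x. \<bar>g x\<bar> powr p')"
    and p: "p > 1" "p' > 1" "1/p + 1/p' = 1"
  shows "(LINT x|M. \<bar>f x * g x\<bar>) \<le> (LINT x|M. \<bar>f x\<bar> powr p) powr (1/p) * (LINT x|M. \<bar>g x\<bar> powr p') powr (1/p')"
proof -
  define A where "A = (LINT x|M. \<bar>f x\<bar> powr p)"
  define B where "B = (LINT x|M. \<bar>g x\<bar> powr p')"
  have A0: "A \<ge> 0" unfolding A_def by (rule integral_nonneg_AE) simp
  have B0: "B \<ge> 0" unfolding B_def by (rule integral_nonneg_AE) simp
  have fgi: "integrable M (\<lambda>x. f x * g x)" by (rule young_integrable[OF fm gm fi gi p])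
  then have afgi: "integrable M (\<lambda>x. \<bar>f x * g x\<bar>)" by (rule integrable_abs)
  show ?thesis
  proof (cases "A = 0 \<or> B = 0")
    case True
    have "AE x in M. \<bar>f x * g x\<bar> = 0"
    proof (cases "A = 0")
      case True
      then have "AE x in M. f x = 0" using zero_norm_AE[OF fi] p unfolding A_def by simp
      then show ?thesis by (rule eventually_mono) simp
    next
      case False
      then have "B = 0" using \<open>A = 0 \<or> B = 0\<close> by simp
      then have "AE x in M. g x = 0" using zero_norm_AE[OF gi] p unfolding B_def by simp
      then show ?thesis by (rule eventually_mono) simp
    qed
    then have "(LINT x|M. \<bar>f x * g x\<bar>) = (LINT x|M. 0)"
      using fm gm by (intro integral_cong_AE) auto
    then show ?thesis using A0 B0 unfolding A_def[symmetric] B_def[symmetric] by simp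
  next
    case False
    then have Ap: "A > 0" and Bp: "B > 0" using A0 B0 by auto
    define a where "a = A powr (1/p)"
    define b where "b = B powr (1/p')"
    have ap: "a > 0" and bp: "b > 0" unfolding a_def b_def using Ap Bp by auto
    have aA: "a powr p = A" unfolding a_def using Ap p by (simp add: powr_powr)
    have bB: "b powr p' = B" unfolding b_def using Bp p by (simp add: powr_powr)
    have pw: "\<bar>f x * g x\<bar> \<le> a * b * (\<bar>f x\<bar> powr p / (p * A) + \<bar>g x\<bar> powr p' / (p' * B))" for x
    proof -
      have "(\<bar>f x\<bar> / a) * (\<bar>g x\<bar> / b) \<le> (\<bar>f x\<bar> / a) powr p / p + (\<bar>g x\<bar> / b) powr p' / p'"
        by (rule Youngs_inequality) (use p ap bp in auto)
      also have "(\<bar>f x\<bar> / a) powr p = \<bar>f x\<bar> powr p / A"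
        using ap aA by (simp add: powr_divide)
      also have "(\<bar>g x\<bar> / b) powr p' = \<bar>g x\<bar> powr p' / B"
        using bp bB by (simp add: powr_divide)
      finally have "(\<bar>f x\<bar> / a) * (\<bar>g x\<bar> / b) \<le> \<bar>f x\<bar> powr p / (p * A) + \<bar>g x\<bar> powr p' / (p' * B)"
        by (simp add: mult.commute)
      then have "a * b * ((\<bar>f x\<bar> / a) * (\<bar>g x\<bar> / b)) \<le> a * b * (\<bar>f x\<bar> powr p / (p * A) + \<bar>g x\<bar> powr p' / (p' * B))"
        using ap bp by (intro mult_left_mono) auto
      then show ?thesis using ap bp by (simp add: abs_mult)
    qed
    have "(LINT x|M. \<bar>f x * g x\<bar>) \<le> (LINT x|M. a * b * (\<bar>f x\<bar> powr p / (p * A) + \<bar>g x\<bar> powr p' / (p' * B)))"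
      by (rule integral_mono[OF afgi]) (use fi gi pw in auto)
    also have "\<dots> = a * b * ((LINT x|M. \<bar>f x\<bar> powr p) / (p * A) + (LINT x|M. \<bar>g x\<bar> powr p') / (p' * B))"
      using fi gi by simp
    also have "\<dots> = a * b * (1/p + 1/p')"
      unfolding A_def[symmetric] B_def[symmetric] using Ap Bp by simp
    also have "\<dots> = a * b" using p by simp
    finally show ?thesis unfolding a_def b_def A_def B_def .
  qed
qed

locale psictx =
  fixes \<psi> :: "real^'n \<Rightarrow> real" and M :: real
  assumes cont: "continuous_on UNIV \<psi>"
    and van: "\<And>z. \<psi> z \<noteq> 0 \<Longrightarrow> norm z < 1"
    and bnd: "\<And>z. \<bar>\<psi> z\<bar> \<le> M"
    and n2: "CARD('n) \<ge> 2"
begin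

lemma M_nonneg: "M \<ge> 0" using bnd[of 0] by linarith

lemma inner_zero:
  assumes "x \<noteq> y" "\<xi> > 1 + norm y"
  shows "inner_fn \<psi> x y \<xi> = 0"
proof -
  let ?u = "(x - y) /\<^sub>R norm (x - y)"
  have nu: "norm ?u = 1" using assms(1) by simp
  have "norm (\<xi> *\<^sub>R ?u) = \<bar>\<xi>\<bar> * norm ?u" by (rule norm_scaleR)
  also have "\<dots> = \<xi>" proof -
    have "\<xi> > 0" using assms(2) norm_ge_zero[of y] by linarith
    then show ?thesis using nu by simp
  qed
  finally have "norm (\<xi> *\<^sub>R ?u) = \<xi>" .
  then have "norm (y + \<xi> *\<^sub>R ?u) \<ge> \<xi> - norm y"
    using norm_triangle_ineq2[of "\<xi> *\<^sub>R ?u" "-y"] by (simp add: algebra_simps)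
  then have "norm (y + \<xi> *\<^sub>R ?u) \<ge> 1" using assms(2) by linarith
  then have "\<psi> (y + \<xi> *\<^sub>R ?u) = 0" using van by force
  then show ?thesis unfolding inner_fn_def by simp
qed

lemma inner_cont: "continuous_on UNIV (inner_fn \<psi> x y)"
  unfolding inner_fn_def
  by (intro continuous_intros continuous_on_compose2[OF cont]) auto

lemma inner_bound:
  assumes "\<xi> \<ge> 0" "x \<noteq> y"
  shows "\<bar>inner_fn \<psi> x y \<xi>\<bar> \<le> M * (1 + norm y) ^ (CARD('n) - 1)"
proof (cases "\<xi> > 1 + norm y")
  case True
  then show ?thesis using inner_zero[OF assms(2) True] M_nonneg by simp
next
  case False
  then have "\<xi> \<le> 1 + norm y" by simp
  then have "\<xi> ^ (CARD('n) - 1) \<le> (1 + norm y) ^ (CARD('n) - 1)"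
    using assms by (intro power_mono) auto
  then show ?thesis unfolding inner_fn_def abs_mult
    using bnd assms M_nonneg
    by (intro mult_mono) auto
qed

lemma inner_int:
  assumes "x \<noteq> y"
  defines "E \<equiv> max (norm (x - y)) (1 + norm y)"
  shows "set_integrable lborel {norm (x - y)..} (inner_fn \<psi> x y)"
    "(LBINT \<xi>:{norm (x - y)..}. inner_fn \<psi> x y \<xi>) = integral {norm (x - y)..E} (inner_fn \<psi> x y)"
    "set_integrable lborel {norm (x - y)..E} (inner_fn \<psi> x y)"
proof -
  let ?d = "norm (x - y)" and ?f = "inner_fn \<psi> x y"
  have eq: "(\<lambda>\<xi>. indicator {?d..} \<xi> *\<^sub>R ?f \<xi>) = (\<lambda>\<xi>. indicator {?d..E} \<xi> *\<^sub>R ?f \<xi>)"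
  proof
    fix \<xi>
    show "indicator {?d..} \<xi> *\<^sub>R ?f \<xi> = indicator {?d..E} \<xi> *\<^sub>R ?f \<xi>"
    proof (cases "\<xi> \<le> E")
      case False
      then have "\<xi> > 1 + norm y" unfolding E_def by simp
      then show ?thesis using inner_zero[OF assms(1)] by simp
    qed (simp add: indicator_def)
  qed
  show i: "set_integrable lborel {?d..E} ?f"
    unfolding set_integrable_def
    by (rule borel_integrable_compact) (auto intro: continuous_on_subset[OF inner_cont])
  then show "set_integrable lborel {?d..} ?f"
    unfolding set_integrable_def eq .
  have "(LBINT \<xi>:{?d..}. ?f \<xi>) = (LBINT \<xi>:{?d..E}. ?f \<xi>)"
    unfolding set_lebesgue_integral_def eq ..
  also have "\<dots> = integral {?d..E} ?f" by (rule set_borel_integral_eq_integral[OF i])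
  finally show "(LBINT \<xi>:{?d..}. ?f \<xi>) = integral {?d..E} ?f" .
qed

lemma I_bound:
  assumes "x \<noteq> y"
  shows "\<bar>LBINT \<xi>:{norm (x - y)..}. inner_fn \<psi> x y \<xi>\<bar> \<le> M * (1 + norm y) ^ CARD('n)"
proof -
  let ?d = "norm (x - y)" and ?f = "inner_fn \<psi> x y"
  define E where "E = max (norm (x - y)) (1 + norm y)"
  define B where "B = M * (1 + norm y) ^ (CARD('n) - 1)"
  have B0: "B \<ge> 0" unfolding B_def using M_nonneg by simp
  have "\<bar>LBINT \<xi>:{?d..}. ?f \<xi>\<bar> = norm (integral (cbox ?d E) ?f)"
    using inner_int(2)[OF assms] unfolding E_def by simp
  also have "\<dots> \<le> B * Henstock_Kurzweil_Integration.content (cbox ?d E)"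
  proof (rule integrable_bound[OF B0])
    show "?f integrable_on cbox ?d E"
      using set_borel_integral_eq_integral(1)[OF inner_int(3)[OF assms]] unfolding E_def by simp
    fix \<xi> assume "\<xi> \<in> cbox ?d E"
    then have "?d \<le> \<xi>" by simp
    then have "\<xi> \<ge> 0" using norm_ge_zero[of "x-y"] by linarith
    then show "norm (?f \<xi>) \<le> B" unfolding B_def using inner_bound[OF _ assms] by simp
  qed
  also have "Henstock_Kurzweil_Integration.content (cbox ?d E) = E - ?d" unfolding E_def by simp
  also have "E - ?d \<le> 1 + norm y" unfolding E_def
    using norm_ge_zero[of "x-y"] norm_ge_zero[of y] by (simp add: max_def)
  then have "B * (E - ?d) \<le> B * (1 + norm y)"
    using B0 by (intro mult_left_mono) auto
  also have "B * (1 + norm y) = M * (1 + norm y) ^ CARD('n)"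
    unfolding B_def using n2 by (simp add: power_eq_if)
  finally show ?thesis .
qed

lemma kernel_bound:
  "norm (kernel \<psi> x y) \<le> M * (1 + norm y) ^ CARD('n) / norm (x - y) ^ (CARD('n) - 1)"
proof (cases "x = y")
  case True
  have z: "norm (x - y) ^ (CARD('n) - 1) = 0" using True by (simp add: zero_power) (use n2 in simp)
  have k: "kernel \<psi> x y = 0" unfolding kernel_def using True by simp
  show ?thesis by (simp only: k z norm_zero div_by_0 order_refl)
next
  case False
  let ?d = "norm (x - y)"
  have d0: "?d > 0" using False by simp
  have "norm (kernel \<psi> x y) = \<bar>LBINT \<xi>:{?d..}. inner_fn \<psi> x y \<xi>\<bar> / ?d ^ CARD('n) * ?d"
    unfolding kernel_def by (simp add: abs_div)
  also have "\<dots> = \<bar>LBINT \<xi>:{?d..}. inner_fn \<psi> x y \<xi>\<bar> / ?d ^ (CARD('n) - 1)"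
    using d0 n2 by (simp add: power_eq_if field_simps)
  also have "\<dots> \<le> M * (1 + norm y) ^ CARD('n) / ?d ^ (CARD('n) - 1)"
    using I_bound[OF False] d0 by (intro divide_right_mono) auto
  finally show ?thesis .
qed

lemma kernel_zero_outside:
  assumes star: "\<forall>p\<in>cball 0 1. star_shaped_wrt p \<Omega>" and x: "x \<notin> \<Omega>" and y: "y \<in> \<Omega>"
  shows "kernel \<psi> x y = 0"
proof -
  have xy: "x \<noteq> y" using x y by auto
  let ?d = "norm (x - y)" and ?u = "(x - y) /\<^sub>R norm (x - y)"
  have d0: "?d > 0" using xy by simp
  have du: "?d *\<^sub>R ?u = x - y" using d0 by simp
  have z: "indicator {?d..} \<xi> *\<^sub>R inner_fn \<psi> x y \<xi> = 0" for \<xi>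
  proof (cases "?d \<le> \<xi> \<and> \<psi> (y + \<xi> *\<^sub>R ?u) \<noteq> 0")
    case True
    define p where "p = y + \<xi> *\<^sub>R ?u"
    have "norm p < 1" using van True unfolding p_def by blast
    then have "p \<in> cball 0 1" by simp
    then have "closed_segment p y \<subseteq> \<Omega>"
      using star y unfolding star_shaped_wrt_def by blast
    moreover have "x \<in> closed_segment y p"
    proof -
      have xi: "\<xi> > 0" using True d0 by linarith
      have "(1 - ?d / \<xi>) *\<^sub>R y + (?d / \<xi>) *\<^sub>R p = y + (?d / \<xi> * \<xi>) *\<^sub>R ?u"
        unfolding p_def by (simp add: algebra_simps)
      also have "\<dots> = x" using xi du by simp
      finally have e1: "(1 - ?d / \<xi>) *\<^sub>R y + (?d / \<xi>) *\<^sub>R p = x" .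
      have e2: "0 \<le> ?d / \<xi>" using xi by simp
      have e3: "?d / \<xi> \<le> 1" using xi True by simp
      show ?thesis unfolding closed_segment_def mem_Collect_eq
        by (intro exI[of _ "?d / \<xi>"] conjI e2 e3 e1[symmetric])
    qed
    ultimately have "x \<in> \<Omega>" by (simp add: closed_segment_commute subset_iff)
    then show ?thesis using x by simp
  next
    case False
    then show ?thesis unfolding inner_fn_def by (auto simp: indicator_def)
  qed
  show ?thesis unfolding kernel_def set_lebesgue_integral_def z by simp
qed

lemma kernel_alpha:
  assumes xy: "x \<noteq> y"
  shows "kernel \<psi> x y = (LBINT \<alpha>:{1..}. \<psi> (y + \<alpha> *\<^sub>R (x - y)) * \<alpha> ^ (CARD('n) - 1)) *\<^sub>R (x - y)"
proof -
  let ?d = "norm (x - y)" and ?u = "(x - y) /\<^sub>R norm (x - y)"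
  let ?h = "\<lambda>\<alpha>. \<psi> (y + \<alpha> *\<^sub>R (x - y)) * \<alpha> ^ (CARD('n) - 1)"
  have d0: "?d > 0" using xy by simp
  have "(LBINT \<xi>:{?d..}. inner_fn \<psi> x y \<xi>) = (LINT \<xi>|lborel. indicator {?d..} \<xi> * inner_fn \<psi> x y \<xi>)"
    unfolding set_lebesgue_integral_def by simp
  also have "\<dots> = \<bar>?d\<bar> *\<^sub>R (LINT \<alpha>|lborel. indicator {?d..} (0 + ?d * \<alpha>) * inner_fn \<psi> x y (0 + ?d * \<alpha>))"
    by (rule lborel_integral_real_affine) (use d0 in simp)
  also have "(\<lambda>\<alpha>. indicator {?d..} (0 + ?d * \<alpha>) * inner_fn \<psi> x y (0 + ?d * \<alpha>))
      = (\<lambda>\<alpha>. ?d ^ (CARD('n) - 1) * (indicator {1..} \<alpha> *\<^sub>R ?h \<alpha>))"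
  proof
    fix \<alpha>
    have i: "indicator {?d..} (?d * \<alpha>) = (indicator {1..} \<alpha> :: real)"
      using d0 by (simp add: indicator_def)
    have e: "(?d * \<alpha>) *\<^sub>R ?u = \<alpha> *\<^sub>R (x - y)" using d0 by simp
    show "indicator {?d..} (0 + ?d * \<alpha>) * inner_fn \<psi> x y (0 + ?d * \<alpha>)
      = ?d ^ (CARD('n) - 1) * (indicator {1..} \<alpha> *\<^sub>R ?h \<alpha>)"
      unfolding inner_fn_def add_0 i e by (simp add: power_mult_distrib mult_ac)
  qed
  also have "(LINT \<alpha>|lborel. ?d ^ (CARD('n) - 1) * (indicator {1..} \<alpha> *\<^sub>R ?h \<alpha>))
     = ?d ^ (CARD('n) - 1) * (LBINT \<alpha>:{1..}. ?h \<alpha>)"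
    unfolding set_lebesgue_integral_def by (rule integral_mult_right_zero)
  finally have "(LBINT \<xi>:{?d..}. inner_fn \<psi> x y \<xi>) = ?d ^ CARD('n) * (LBINT \<alpha>:{1..}. ?h \<alpha>)"
    using d0 n2 by (simp add: power_eq_if)
  then show ?thesis unfolding kernel_def using d0 by simp
qed

lemma kernel_r:
  assumes xy: "x \<noteq> y"
  shows "(LBINT \<xi>:{norm (x - y)..}. inner_fn \<psi> x y \<xi>) =
    (LBINT r:{0..}. \<psi> (x + r *\<^sub>R ((x - y) /\<^sub>R norm (x - y))) * (norm (x - y) + r) ^ (CARD('n) - 1))"
proof -
  let ?d = "norm (x - y)" and ?u = "(x - y) /\<^sub>R norm (x - y)"
  have d0: "?d > 0" using xy by simp
  have du: "?d *\<^sub>R ?u = x - y" using d0 by simp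
  have "(LBINT \<xi>:{?d..}. inner_fn \<psi> x y \<xi>) = (LINT \<xi>|lborel. indicator {?d..} \<xi> * inner_fn \<psi> x y \<xi>)"
    unfolding set_lebesgue_integral_def by simp
  also have "\<dots> = \<bar>1\<bar> *\<^sub>R (LINT r|lborel. indicator {?d..} (?d + 1 * r) * inner_fn \<psi> x y (?d + 1 * r))"
    by (rule lborel_integral_real_affine) simp
  also have "(\<lambda>r. indicator {?d..} (?d + 1 * r) * inner_fn \<psi> x y (?d + 1 * r))
      = (\<lambda>r. indicator {0..} r *\<^sub>R (\<psi> (x + r *\<^sub>R ?u) * (?d + r) ^ (CARD('n) - 1)))"
  proof
    fix r
    have i: "indicator {?d..} (?d + r) = (indicator {0..} r :: real)"
      by (simp add: indicator_def)
    have "y + (?d + r) *\<^sub>R ?u = y + ?d *\<^sub>R ?u + r *\<^sub>R ?u"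
      by (simp only: scaleR_add_left add.assoc)
    also have "\<dots> = x + r *\<^sub>R ?u" by (simp only: du) simp
    finally have e: "y + (?d + r) *\<^sub>R ?u = x + r *\<^sub>R ?u" .
    show "indicator {?d..} (?d + 1 * r) * inner_fn \<psi> x y (?d + 1 * r)
      = indicator {0..} r *\<^sub>R (\<psi> (x + r *\<^sub>R ?u) * (?d + r) ^ (CARD('n) - 1))"
      unfolding mult_1 inner_fn_def i e by simp
  qed
  finally show ?thesis unfolding set_lebesgue_integral_def by simp
qed

lemma psi_meas[measurable]: "\<psi> \<in> borel_measurable borel"
  using cont by (rule borel_measurable_continuous_onI)

lemma kernel_meas: "kernel \<psi> x \<in> borel_measurable borel"
proof -
  have eq: "\<And>y \<xi>. indicator {norm (x - y)..} \<xi> *\<^sub>R inner_fn \<psi> x y \<xi> =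
     (if norm (x - y) \<le> \<xi> then \<psi> (y + \<xi> *\<^sub>R ((x - y) /\<^sub>R norm (x - y))) * \<xi> ^ (CARD('n) - 1) else 0)"
    by (simp add: indicator_def inner_fn_def)
  have m: "(\<lambda>(y, \<xi>). indicator {norm (x - y)..} \<xi> *\<^sub>R inner_fn \<psi> x y \<xi>) \<in> borel_measurable (borel \<Otimes>\<^sub>M lborel)"
    unfolding eq by measurable
  have "(\<lambda>y. LBINT \<xi>:{norm (x - y)..}. inner_fn \<psi> x y \<xi>) \<in> borel_measurable borel"
    unfolding set_lebesgue_integral_def
    using lborel.borel_measurable_lebesgue_integral[OF m] by simp
  then show ?thesis unfolding kernel_def[abs_def] by measurable
qed

lemma kernel_Lp:
  fixes p D :: real
  assumes Dn: "\<forall>y\<in>\<Omega>. norm y \<le> D" and sub: "\<Omega> \<subseteq> cball x D" and D0: "0 \<le> D"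
    and p: "p > 0" and s: "(CARD('n) - 1) * p < CARD('n)"
  shows "(\<integral>\<^sup>+ y. indicator \<Omega> y * ennreal (norm (kernel \<psi> x y) powr p) \<partial>lborel)
    \<le> ennreal ((M * (1 + D) ^ CARD('n)) powr p *
        (2 * (D powr (1 - (CARD('n) - 1) * p / CARD('n)) / (1 - (CARD('n) - 1) * p / CARD('n)))) ^ CARD('n))"
proof -
  define C where "C = M * (1 + D) ^ CARD('n)"
  define s where "s = (CARD('n) - 1) * p"
  have C0: "C \<ge> 0" unfolding C_def using M_nonneg D0 by simp
  have s0: "s \<ge> 0" unfolding s_def using p by simp
  have pw: "indicator \<Omega> y * ennreal (norm (kernel \<psi> x y) powr p)
      \<le> ennreal (C powr p) * (indicator (cball x D) y * ennreal (norm (x - y) powr (-s)))" for y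
  proof (cases "y \<in> \<Omega> \<and> y \<noteq> x")
    case False
    show ?thesis
    proof (cases "y \<in> \<Omega>")
      case False then show ?thesis by simp
    next
      case True
      then have "y = x" using \<open>\<not> (y \<in> \<Omega> \<and> y \<noteq> x)\<close> by simp
      then have "kernel \<psi> x y = 0" unfolding kernel_def by simp
      then show ?thesis by simp
    qed
  next
    case True
    let ?d = "norm (x - y)"
    have "x \<noteq> y" using True by auto
    then have d0: "?d > 0" by simp
    have yc: "y \<in> cball x D" using sub True by blast
    have "norm (kernel \<psi> x y) \<le> M * (1 + norm y) ^ CARD('n) / ?d ^ (CARD('n) - 1)"
      by (rule kernel_bound)
    also have "\<dots> \<le> C / ?d ^ (CARD('n) - 1)" unfolding C_def
      using Dn True M_nonneg d0 by (intro divide_right_mono mult_left_mono power_mono) auto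
    finally have kb: "norm (kernel \<psi> x y) \<le> C / ?d ^ (CARD('n) - 1)" .
    have "norm (kernel \<psi> x y) powr p \<le> (C / ?d ^ (CARD('n) - 1)) powr p"
      by (rule powr_mono2) (use p kb in auto)
    also have "(C / ?d ^ (CARD('n) - 1)) powr p = C powr p / (?d ^ (CARD('n) - 1)) powr p"
      using C0 d0 by (simp add: powr_divide)
    also have "(?d ^ (CARD('n) - 1)) powr p = ?d powr s"
    proof -
      have "?d ^ (CARD('n) - 1) = ?d powr real (CARD('n) - 1)"
        by (rule powr_realpow[symmetric]) (use d0 in simp)
      then show ?thesis unfolding s_def using d0 n2 by (simp add: powr_powr of_nat_diff)
    qed
    also have "C powr p / ?d powr s = C powr p * ?d powr (-s)"
      by (simp add: powr_minus divide_inverse)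
    finally have "norm (kernel \<psi> x y) powr p \<le> C powr p * ?d powr (-s)" .
    then have "ennreal (norm (kernel \<psi> x y) powr p) \<le> ennreal (C powr p * ?d powr (-s))"
      by (rule ennreal_leI)
    then show ?thesis using True yc by (simp add: ennreal_mult')
  qed
  have "(\<integral>\<^sup>+ y. indicator \<Omega> y * ennreal (norm (kernel \<psi> x y) powr p) \<partial>lborel)
     \<le> (\<integral>\<^sup>+ y. ennreal (C powr p) * (indicator (cball x D) y * ennreal (norm (x - y) powr (-s))) \<partial>lborel)"
    by (rule nn_integral_mono) (rule pw)
  also have "\<dots> = ennreal (C powr p) * (\<integral>\<^sup>+ y. indicator (cball x D) y * ennreal (norm (x - y) powr (-s)) \<partial>lborel)"
  proof (rule nn_integral_cmult)
    have [measurable]: "cball x D \<in> sets borel" by simp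
    show "(\<lambda>y. indicator (cball x D) y * ennreal (norm (x - y) powr (-s))) \<in> borel_measurable lborel"
      by measurable
  qed
  also have "\<dots> \<le> ennreal (C powr p) * ennreal ((2 * (D powr (1 - s / CARD('n)) / (1 - s / CARD('n)))) ^ CARD('n))"
    by (intro mult_left_mono radial) (use s0 s D0 in \<open>auto simp: s_def\<close>)
  also have "\<dots> = ennreal (C powr p * (2 * (D powr (1 - s / CARD('n)) / (1 - s / CARD('n)))) ^ CARD('n))"
  proof -
    have "0 \<le> 1 - s / CARD('n)" using s unfolding s_def by (simp add: field_simps)
    then show ?thesis by (simp add: ennreal_mult')
  qed
  finally show ?thesis unfolding C_def s_def .
qed

lemma per_x:
  fixes q D p K :: real and \<Omega> :: "(real^'n) set" and F :: "real^'n \<Rightarrow> real"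
  defines "p \<equiv> q / (q - 1)"
  defines "K \<equiv> (M * (1 + D) ^ CARD('n)) powr p *
        (2 * (D powr (1 - (CARD('n) - 1) * p / CARD('n)) / (1 - (CARD('n) - 1) * p / CARD('n)))) ^ CARD('n)"
  assumes q: "q > CARD('n)"
    and Om: "open \<Omega>" and x: "x \<in> \<Omega>"
    and Dn: "\<forall>y\<in>\<Omega>. norm y \<le> D" and sub: "\<Omega> \<subseteq> cball x D" and D0: "0 \<le> D"
    and Fm: "F \<in> borel_measurable (lebesgue_on \<Omega>)"
    and Fi: "set_integrable lebesgue \<Omega> (\<lambda>y. \<bar>F y\<bar> powr q)"
  shows "integrable (lebesgue_on \<Omega>) (\<lambda>y. F y *\<^sub>R kernel \<psi> x y)"
    "norm (v_op \<psi> \<Omega> F x) \<le> K powr (1/p) * Lq_norm q \<Omega> F"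
proof -
  let ?L = "lebesgue_on \<Omega>"
  have q1: "q > 1" using q n2 by linarith
  have p1: "p > 1" unfolding p_def using q1 by (simp add: field_simps)
  have pq: "1/q + 1/p = 1" unfolding p_def using q1 by (simp add: field_simps)
  have sp: "(CARD('n) - 1) * p < CARD('n)"
  proof -
    have "(real CARD('n) - 1) * q < real CARD('n) * (q - 1)" using q by (simp add: algebra_simps)
    then show ?thesis unfolding p_def using q1 n2 by (simp add: field_simps of_nat_diff)
  qed
  have Ol: "\<Omega> \<inter> space lebesgue \<in> sets lebesgue" using Om by simp
  have km: "(\<lambda>y. norm (kernel \<psi> x y)) \<in> borel_measurable ?L"
  proof -
    have "(\<lambda>y. norm (kernel \<psi> x y)) \<in> borel_measurable borel" using kernel_meas by measurable
    then have "(\<lambda>y. norm (kernel \<psi> x y)) \<in> borel_measurable lborel" by simp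
    then have "(\<lambda>y. norm (kernel \<psi> x y)) \<in> borel_measurable lebesgue" by (rule measurable_completion)
    then show ?thesis by (rule measurable_restrict_space1)
  qed
  have Fi': "integrable ?L (\<lambda>y. \<bar>F y\<bar> powr q)"
    using Fi unfolding set_integrable_def integrable_restrict_space[OF Ol] .
  have kpm: "(\<lambda>y. \<bar>norm (kernel \<psi> x y)\<bar> powr p) \<in> borel_measurable borel"
    using kernel_meas by measurable
  have nn: "(\<integral>\<^sup>+ y. ennreal (\<bar>norm (kernel \<psi> x y)\<bar> powr p) \<partial>?L)
      = (\<integral>\<^sup>+ y. indicator \<Omega> y * ennreal (norm (kernel \<psi> x y) powr p) \<partial>lborel)"
  proof -
    have "(\<integral>\<^sup>+ y. ennreal (\<bar>norm (kernel \<psi> x y)\<bar> powr p) \<partial>?L)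
       = (\<integral>\<^sup>+ y. ennreal (\<bar>norm (kernel \<psi> x y)\<bar> powr p) * indicator \<Omega> y \<partial>lebesgue)"
      by (rule nn_integral_restrict_space[OF Ol])
    also have "\<dots> = (\<integral>\<^sup>+ y. ennreal (\<bar>norm (kernel \<psi> x y)\<bar> powr p) * indicator \<Omega> y \<partial>lborel)"
      by (rule nn_integral_completion)
    finally show ?thesis by (simp add: mult.commute)
  qed
  have K0: "K \<ge> 0" unfolding K_def
  proof -
    have "0 \<le> 1 - (CARD('n) - 1) * p / CARD('n)" using sp by (simp add: field_simps)
    then show "0 \<le> (M * (1 + D) ^ CARD('n)) powr p *
        (2 * (D powr (1 - (CARD('n) - 1) * p / CARD('n)) / (1 - (CARD('n) - 1) * p / CARD('n)))) ^ CARD('n)"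
      by simp
  qed
  have nnK: "(\<integral>\<^sup>+ y. ennreal (\<bar>norm (kernel \<psi> x y)\<bar> powr p) \<partial>?L) \<le> ennreal K"
    unfolding nn K_def using p1 by (intro kernel_Lp[OF Dn sub D0]) (use sp in auto)
  have gi: "integrable ?L (\<lambda>y. \<bar>norm (kernel \<psi> x y)\<bar> powr p)"
  proof (rule integrableI_nonneg)
    show "(\<lambda>y. \<bar>norm (kernel \<psi> x y)\<bar> powr p) \<in> borel_measurable ?L"
      using km by measurable
    show "(\<integral>\<^sup>+ y. ennreal (\<bar>norm (kernel \<psi> x y)\<bar> powr p) \<partial>?L) < \<infinity>"
      using nnK by (simp add: le_less_trans)
  qed simp
  have gK: "(LINT y|?L. \<bar>norm (kernel \<psi> x y)\<bar> powr p) \<le> K"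
  proof -
    have "ennreal (LINT y|?L. \<bar>norm (kernel \<psi> x y)\<bar> powr p) \<le> ennreal K"
      using nnK nn_integral_eq_integral[OF gi] by simp
    then show ?thesis using K0 by (simp add: ennreal_le_iff)
  qed
  have prodi: "integrable ?L (\<lambda>y. F y * norm (kernel \<psi> x y))"
    by (rule young_integrable[OF Fm km Fi' gi q1 p1 pq])
  show ki: "integrable ?L (\<lambda>y. F y *\<^sub>R kernel \<psi> x y)"
  proof (rule Bochner_Integration.integrable_bound[OF prodi])
    show "(\<lambda>y. F y *\<^sub>R kernel \<psi> x y) \<in> borel_measurable ?L"
    proof -
      have "kernel \<psi> x \<in> borel_measurable lborel" using kernel_meas by simp
      then have "kernel \<psi> x \<in> borel_measurable lebesgue" by (rule measurable_completion)
      then have "kernel \<psi> x \<in> borel_measurable ?L" by (rule measurable_restrict_space1)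
      then show ?thesis using Fm by measurable
    qed
  qed (simp add: abs_mult)
  have "norm (v_op \<psi> \<Omega> F x) = norm (LINT y|?L. F y *\<^sub>R kernel \<psi> x y)"
    unfolding v_op_def set_lebesgue_integral_def integral_restrict_space[OF Ol] ..
  also have "\<dots> \<le> (LINT y|?L. norm (F y *\<^sub>R kernel \<psi> x y))" by (rule integral_norm_bound)
  also have "\<dots> = (LINT y|?L. \<bar>F y * norm (kernel \<psi> x y)\<bar>)" by (simp add: abs_mult)
  also have "\<dots> \<le> (LINT y|?L. \<bar>F y\<bar> powr q) powr (1/q) * (LINT y|?L. \<bar>norm (kernel \<psi> x y)\<bar> powr p) powr (1/p)"
    by (rule holder[OF Fm km Fi' gi q1 p1 pq])
  also have "\<dots> \<le> (LINT y|?L. \<bar>F y\<bar> powr q) powr (1/q) * K powr (1/p)"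
  proof (rule mult_left_mono)
    show "(LINT y|?L. \<bar>norm (kernel \<psi> x y)\<bar> powr p) powr (1/p) \<le> K powr (1/p)"
      by (rule powr_mono2) (use p1 gK in \<open>auto intro: integral_nonneg_AE\<close>)
  qed simp
  also have "(LINT y|?L. \<bar>F y\<bar> powr q) = (LINT y:\<Omega>|lebesgue. \<bar>F y\<bar> powr q)"
    unfolding set_lebesgue_integral_def integral_restrict_space[OF Ol] ..
  finally show "norm (v_op \<psi> \<Omega> F x) \<le> K powr (1/p) * Lq_norm q \<Omega> F"
    unfolding Lq_norm_def by (simp add: mult.commute)
qed

end

lemma refl_distr: "distr lebesgue lebesgue (\<lambda>z. x - z) = (lebesgue :: (real^'n) measure)"
proof -
  have c: "\<And>j. j \<in> (Basis :: (real^'n) set) \<Longrightarrow> (-1::real) \<noteq> 0" by simp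
  have T: "(\<lambda>z::real^'n. x + (\<Sum>j\<in>Basis. (-1 * (z \<bullet> j)) *\<^sub>R j)) = (\<lambda>z. x - z)"
  proof
    fix z :: "real^'n"
    have "(\<Sum>j\<in>Basis. (-1 * (z \<bullet> j)) *\<^sub>R j) = - (\<Sum>j\<in>Basis. (z \<bullet> j) *\<^sub>R j)"
      by (simp add: sum_negf)
    then show "x + (\<Sum>j\<in>Basis. (-1 * (z \<bullet> j)) *\<^sub>R j) = x - z"
      by (simp add: euclidean_representation)
  qed
  have L0: "lebesgue = density (distr lebesgue lebesgue (\<lambda>z::real^'n. x + (\<Sum>j\<in>Basis. (-1 * (z \<bullet> j)) *\<^sub>R j)))
      (\<lambda>_. ennreal (\<Prod>j\<in>Basis. \<bar>-1::real\<bar>))"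
    using lebesgue_affine_euclidean[of "\<lambda>_. -1::real" x] by simp
  have P: "(\<Prod>j\<in>(Basis::(real^'n) set). \<bar>-1::real\<bar>) = 1" by simp
  have L1: "lebesgue = density (distr lebesgue lebesgue ((-) x)) (\<lambda>_. ennreal (\<Prod>j\<in>(Basis::(real^'n) set). \<bar>-1::real\<bar>))"
    using L0 unfolding T .
  have L: "lebesgue = density (distr lebesgue lebesgue ((-) x)) (\<lambda>_. 1)"
    using L1 unfolding P ennreal_1 .
  show ?thesis using L unfolding density_1 by (rule sym)
qed

lemma refl_meas: "(\<lambda>z. x - z) \<in> (lebesgue :: (real^'n) measure) \<rightarrow>\<^sub>M lebesgue"
proof -
  have T: "(\<lambda>z::real^'n. x + (\<Sum>j\<in>Basis. (-1 * (z \<bullet> j)) *\<^sub>R j)) = (\<lambda>z. x - z)"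
  proof
    fix z :: "real^'n"
    have "(\<Sum>j\<in>Basis. (-1 * (z \<bullet> j)) *\<^sub>R j) = - (\<Sum>j\<in>Basis. (z \<bullet> j) *\<^sub>R j)"
      by (simp add: sum_negf)
    then show "x + (\<Sum>j\<in>Basis. (-1 * (z \<bullet> j)) *\<^sub>R j) = x - z"
      by (simp add: euclidean_representation)
  qed
  have "(\<lambda>z::real^'n. x + (\<Sum>j\<in>Basis. (-1 * (z \<bullet> j)) *\<^sub>R j)) \<in> lebesgue \<rightarrow>\<^sub>M lebesgue"
    using lebesgue_affine_measurable[of "\<lambda>_. -1::real" x] by simp
  then show ?thesis unfolding T .
qed

theorem theorem1:
  fixes \<psi> :: "real^'n \<Rightarrow> real" and q :: real
  assumes n2: "CARD('n) \<ge> 2"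
    and smooth: "smooth_fun \<psi>"
    and supp: "supp \<psi> \<subseteq> ball 0 1"
    and nonzero: "\<exists>x. \<psi> x \<noteq> 0"
    and q: "q > real CARD('n)"
  shows "\<forall>D. \<exists>c. \<forall>(\<Omega> :: (real^'n) set) (F :: real^'n \<Rightarrow> real).
     bounded \<Omega> \<and> open \<Omega> \<and> (\<forall>p\<in>cball 0 1. star_shaped_wrt p \<Omega>) \<and> diameter \<Omega> = D \<and>
     F \<in> borel_measurable (lebesgue_on \<Omega>) \<and> set_integrable lebesgue \<Omega> (\<lambda>y. \<bar>F y\<bar> powr q)
     \<longrightarrow>
       (\<forall>x y. x \<noteq> y \<longrightarrow> set_integrable lborel {norm (x - y)..} (inner_fn \<psi> x y))
     \<and> (\<forall>x. set_integrable lebesgue \<Omega> (\<lambda>y. F y *\<^sub>R kernel \<psi> x y))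
     \<and> (\<forall>x. x \<notin> \<Omega> \<longrightarrow> v_op \<psi> \<Omega> F x = 0)
     \<and> (\<forall>x. norm (v_op \<psi> \<Omega> F x) \<le> c * Lq_norm q \<Omega> F)
     \<and> (\<forall>x. v_op \<psi> \<Omega> F x =
          (LINT y:\<Omega>|lebesgue. F y *\<^sub>R
             ((LBINT \<alpha>:{1..}. \<psi> (y + \<alpha> *\<^sub>R (x - y)) * \<alpha> ^ (CARD('n) - 1)) *\<^sub>R (x - y))))
     \<and> (\<forall>x. v_op \<psi> \<Omega> F x =
          (LINT y:\<Omega>|lebesgue. F y *\<^sub>R
             (((LBINT r:{0..}. \<psi> (x + r *\<^sub>R ((x - y) /\<^sub>R norm (x - y))) * (norm (x - y) + r) ^ (CARD('n) - 1))
               / norm (x - y) ^ CARD('n)) *\<^sub>R (x - y))))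
     \<and> (\<forall>x. v_op \<psi> \<Omega> F x =
          (LINT z:((\<lambda>y. x - y) ` \<Omega>)|lebesgue. F (x - z) *\<^sub>R
             (((LBINT r:{0..}. \<psi> (x + r *\<^sub>R (z /\<^sub>R norm z)) * (norm z + r) ^ (CARD('n) - 1))
               / norm z ^ CARD('n)) *\<^sub>R z)))"
proof -
  have c: "continuous_on UNIV \<psi>" by (rule psi_cont[OF smooth])
  have v: "\<And>z. \<psi> z \<noteq> 0 \<Longrightarrow> norm z < 1" by (rule psi_vanish[OF supp])
  obtain M where bndM: "\<forall>z. \<bar>\<psi> z\<bar> \<le> M" using psi_bound[OF c v] by blast
  interpret P: psictx \<psi> M
    by unfold_locales (use c v bndM n2 in auto)
  show ?thesis
  proof
    fix D :: real
    define p where "p = q / (q - 1)"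
    define K where "K = (M * (1 + D) ^ CARD('n)) powr p *
        (2 * (D powr (1 - (CARD('n) - 1) * p / CARD('n)) / (1 - (CARD('n) - 1) * p / CARD('n)))) ^ CARD('n)"
    show "\<exists>c. \<forall>(\<Omega> :: (real^'n) set) (F :: real^'n \<Rightarrow> real).
     bounded \<Omega> \<and> open \<Omega> \<and> (\<forall>p\<in>cball 0 1. star_shaped_wrt p \<Omega>) \<and> diameter \<Omega> = D \<and>
     F \<in> borel_measurable (lebesgue_on \<Omega>) \<and> set_integrable lebesgue \<Omega> (\<lambda>y. \<bar>F y\<bar> powr q)
     \<longrightarrow>
       (\<forall>x y. x \<noteq> y \<longrightarrow> set_integrable lborel {norm (x - y)..} (inner_fn \<psi> x y))
     \<and> (\<forall>x. set_integrable lebesgue \<Omega> (\<lambda>y. F y *\<^sub>R kernel \<psi> x y))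
     \<and> (\<forall>x. x \<notin> \<Omega> \<longrightarrow> v_op \<psi> \<Omega> F x = 0)
     \<and> (\<forall>x. norm (v_op \<psi> \<Omega> F x) \<le> c * Lq_norm q \<Omega> F)
     \<and> (\<forall>x. v_op \<psi> \<Omega> F x =
          (LINT y:\<Omega>|lebesgue. F y *\<^sub>R
             ((LBINT \<alpha>:{1..}. \<psi> (y + \<alpha> *\<^sub>R (x - y)) * \<alpha> ^ (CARD('n) - 1)) *\<^sub>R (x - y))))
     \<and> (\<forall>x. v_op \<psi> \<Omega> F x =
          (LINT y:\<Omega>|lebesgue. F y *\<^sub>R
             (((LBINT r:{0..}. \<psi> (x + r *\<^sub>R ((x - y) /\<^sub>R norm (x - y))) * (norm (x - y) + r) ^ (CARD('n) - 1))
               / norm (x - y) ^ CARD('n)) *\<^sub>R (x - y))))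
     \<and> (\<forall>x. v_op \<psi> \<Omega> F x =
          (LINT z:((\<lambda>y. x - y) ` \<Omega>)|lebesgue. F (x - z) *\<^sub>R
             (((LBINT r:{0..}. \<psi> (x + r *\<^sub>R (z /\<^sub>R norm z)) * (norm z + r) ^ (CARD('n) - 1))
               / norm z ^ CARD('n)) *\<^sub>R z)))"
    proof (rule exI[of _ "K powr (1/p)"], intro allI impI)
      fix \<Omega> :: "(real^'n) set" and F :: "real^'n \<Rightarrow> real"
      assume H: "bounded \<Omega> \<and> open \<Omega> \<and> (\<forall>p\<in>cball 0 1. star_shaped_wrt p \<Omega>) \<and> diameter \<Omega> = D \<and>
        F \<in> borel_measurable (lebesgue_on \<Omega>) \<and> set_integrable lebesgue \<Omega> (\<lambda>y. \<bar>F y\<bar> powr q)"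
      then have bO: "bounded \<Omega>" and oO: "open \<Omega>" and st: "\<forall>p\<in>cball 0 1. star_shaped_wrt p \<Omega>"
        and dO: "diameter \<Omega> = D" and Fm: "F \<in> borel_measurable (lebesgue_on \<Omega>)"
        and Fi: "set_integrable lebesgue \<Omega> (\<lambda>y. \<bar>F y\<bar> powr q)" by auto
      have "star_shaped_wrt 0 \<Omega>" using st by simp
      then have O0: "0 \<in> \<Omega>" unfolding star_shaped_wrt_def by simp
      have dist_le: "\<And>x y. x \<in> \<Omega> \<Longrightarrow> y \<in> \<Omega> \<Longrightarrow> dist x y \<le> D"
        using diameter_bounded_bound[OF bO] dO by simp
      have Dn: "\<forall>y\<in>\<Omega>. norm y \<le> D" using dist_le[OF O0] by simp
      have D0: "0 \<le> D" using Dn O0 by fastforce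
      have Ol: "\<Omega> \<inter> space lebesgue \<in> sets lebesgue" using oO by simp
      have kz: "\<And>x y. x \<notin> \<Omega> \<Longrightarrow> y \<in> \<Omega> \<Longrightarrow> kernel \<psi> x y = 0"
        using P.kernel_zero_outside[OF st] by blast
      have iz: "\<And>x. x \<notin> \<Omega> \<Longrightarrow> (\<lambda>y. indicator \<Omega> y *\<^sub>R (F y *\<^sub>R kernel \<psi> x y)) = (\<lambda>y. 0)"
      proof
        fix x y assume "x \<notin> \<Omega>"
        then show "indicator \<Omega> y *\<^sub>R (F y *\<^sub>R kernel \<psi> x y) = 0"
          using kz by (cases "y \<in> \<Omega>") auto
      qed
      have vz: "\<And>x. x \<notin> \<Omega> \<Longrightarrow> v_op \<psi> \<Omega> F x = 0"
        unfolding v_op_def set_lebesgue_integral_def using iz by simp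
      have subc: "\<And>x. x \<in> \<Omega> \<Longrightarrow> \<Omega> \<subseteq> cball x D"
        using dist_le by (auto simp: subset_iff)
      have ints: "integrable (lebesgue_on \<Omega>) (\<lambda>y. F y *\<^sub>R kernel \<psi> x y)" for x
      proof (cases "x \<in> \<Omega>")
        case True
        show ?thesis by (rule P.per_x(1)[OF q oO True Dn subc[OF True] D0 Fm Fi])
      next
        case False
        show ?thesis unfolding integrable_restrict_space[OF Ol] iz[OF False] by simp
      qed
      have sints: "set_integrable lebesgue \<Omega> (\<lambda>y. F y *\<^sub>R kernel \<psi> x y)" for x
        using ints[of x] unfolding set_integrable_def integrable_restrict_space[OF Ol] .
      have bound: "norm (v_op \<psi> \<Omega> F x) \<le> K powr (1/p) * Lq_norm q \<Omega> F" for x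
      proof (cases "x \<in> \<Omega>")
        case True
        show ?thesis unfolding K_def p_def
          by (rule P.per_x(2)[OF q oO True Dn subc[OF True] D0 Fm Fi])
      next
        case False
        show ?thesis using vz[OF False] by (simp add: Lq_norm_def)
      qed
      have e5: "F y *\<^sub>R kernel \<psi> x y = F y *\<^sub>R
             ((LBINT \<alpha>:{1..}. \<psi> (y + \<alpha> *\<^sub>R (x - y)) * \<alpha> ^ (CARD('n) - 1)) *\<^sub>R (x - y))" for x y
      proof (cases "x = y")
        case True then show ?thesis by (simp add: kernel_def)
      next
        case False then show ?thesis using P.kernel_alpha by simp
      qed
      have e6: "kernel \<psi> x y = (((LBINT r:{0..}. \<psi> (x + r *\<^sub>R ((x - y) /\<^sub>R norm (x - y))) * (norm (x - y) + r) ^ (CARD('n) - 1))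
               / norm (x - y) ^ CARD('n)) *\<^sub>R (x - y))" for x y
      proof (cases "x = y")
        case True then show ?thesis by (simp add: kernel_def)
      next
        case False then show ?thesis unfolding kernel_def using P.kernel_r by simp
      qed
      have e7: "v_op \<psi> \<Omega> F x =
          (LINT z:((\<lambda>y. x - y) ` \<Omega>)|lebesgue. F (x - z) *\<^sub>R
             (((LBINT r:{0..}. \<psi> (x + r *\<^sub>R (z /\<^sub>R norm z)) * (norm z + r) ^ (CARD('n) - 1))
               / norm z ^ CARD('n)) *\<^sub>R z))" for x
      proof -
        let ?G = "\<lambda>y. indicator \<Omega> y *\<^sub>R (F y *\<^sub>R kernel \<psi> x y)"
        have Gm: "?G \<in> borel_measurable lebesgue"
          using sints[of x] unfolding set_integrable_def by (rule borel_measurable_integrable)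
        have pw: "?G (x - z) = indicator ((\<lambda>y. x - y) ` \<Omega>) z *\<^sub>R (F (x - z) *\<^sub>R
             (((LBINT r:{0..}. \<psi> (x + r *\<^sub>R (z /\<^sub>R norm z)) * (norm z + r) ^ (CARD('n) - 1))
               / norm z ^ CARD('n)) *\<^sub>R z))" for z
        proof -

          have im: "z \<in> (\<lambda>y. x - y) ` \<Omega> \<longleftrightarrow> x - z \<in> \<Omega>"
          proof
            assume "z \<in> (\<lambda>y. x - y) ` \<Omega>"
            then obtain y where "y \<in> \<Omega>" "z = x - y" by blast
            then show "x - z \<in> \<Omega>" by simp
          next
            assume "x - z \<in> \<Omega>"
            then show "z \<in> (\<lambda>y. x - y) ` \<Omega>" by (rule rev_image_eqI) simp
          qed
          have "kernel \<psi> x (x - z) = (((LBINT r:{0..}. \<psi> (x + r *\<^sub>R (z /\<^sub>R norm z)) * (norm z + r) ^ (CARD('n) - 1))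
               / norm z ^ CARD('n)) *\<^sub>R z)"
            using e6[of x "x - z"] by simp
          then show "?G (x - z) = indicator ((\<lambda>y. x - y) ` \<Omega>) z *\<^sub>R (F (x - z) *\<^sub>R
             (((LBINT r:{0..}. \<psi> (x + r *\<^sub>R (z /\<^sub>R norm z)) * (norm z + r) ^ (CARD('n) - 1))
               / norm z ^ CARD('n)) *\<^sub>R z))"
            by (simp add: indicator_def im)
        qed
        have "v_op \<psi> \<Omega> F x = (LINT y|lebesgue. ?G y)"
          unfolding v_op_def set_lebesgue_integral_def ..
        also have "\<dots> = (LINT y|distr lebesgue lebesgue ((-) x). ?G y)"
          by (simp only: refl_distr)
        also have "\<dots> = (LINT z|lebesgue. ?G (x - z))"
          by (rule integral_distr[OF refl_meas Gm])
        also have "\<dots> = (LINT z:((\<lambda>y. x - y) ` \<Omega>)|lebesgue. F (x - z) *\<^sub>R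
             (((LBINT r:{0..}. \<psi> (x + r *\<^sub>R (z /\<^sub>R norm z)) * (norm z + r) ^ (CARD('n) - 1))
               / norm z ^ CARD('n)) *\<^sub>R z))"
          unfolding set_lebesgue_integral_def pw ..
        finally show ?thesis .
      qed
      show "(\<forall>x y. x \<noteq> y \<longrightarrow> set_integrable lborel {norm (x - y)..} (inner_fn \<psi> x y))
     \<and> (\<forall>x. set_integrable lebesgue \<Omega> (\<lambda>y. F y *\<^sub>R kernel \<psi> x y))
     \<and> (\<forall>x. x \<notin> \<Omega> \<longrightarrow> v_op \<psi> \<Omega> F x = 0)
     \<and> (\<forall>x. norm (v_op \<psi> \<Omega> F x) \<le> K powr (1/p) * Lq_norm q \<Omega> F)
     \<and> (\<forall>x. v_op \<psi> \<Omega> F x =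
          (LINT y:\<Omega>|lebesgue. F y *\<^sub>R
             ((LBINT \<alpha>:{1..}. \<psi> (y + \<alpha> *\<^sub>R (x - y)) * \<alpha> ^ (CARD('n) - 1)) *\<^sub>R (x - y))))
     \<and> (\<forall>x. v_op \<psi> \<Omega> F x =
          (LINT y:\<Omega>|lebesgue. F y *\<^sub>R
             (((LBINT r:{0..}. \<psi> (x + r *\<^sub>R ((x - y) /\<^sub>R norm (x - y))) * (norm (x - y) + r) ^ (CARD('n) - 1))
               / norm (x - y) ^ CARD('n)) *\<^sub>R (x - y))))
     \<and> (\<forall>x. v_op \<psi> \<Omega> F x =
          (LINT z:((\<lambda>y. x - y) ` \<Omega>)|lebesgue. F (x - z) *\<^sub>R
             (((LBINT r:{0..}. \<psi> (x + r *\<^sub>R (z /\<^sub>R norm z)) * (norm z + r) ^ (CARD('n) - 1))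
               / norm z ^ CARD('n)) *\<^sub>R z)))"
        apply (intro conjI allI impI)
        apply (erule P.inner_int(1))
        apply (rule sints)
        apply (erule vz)
        apply (rule bound)
        apply (simp only: v_op_def e5)
        apply (simp only: v_op_def e6)
        apply (rule e7)
        done
    qed
  qed
qed

end
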